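(* The facets of the convex hull in $K\otimes\mathbb R\cong\mathbb R^3$ of the set of totally positive elements of $\mathcal O$ are precisely the translates, under multiplication by totally positive units of $\mathcal O$, of the two triangles with vertices $\{1,\ w^2,\ (w+1)^2\}$ and $\{1,\ w+2,\ (w+1)^2\}$.
   Context: $w=\zeta_7+\zeta_7^{-1}$ with $\zeta_7=e^{2\pi i/7}$, $K=\mathbb Q(w)$ the totally real cubic field of discriminant $49$, $\mathcal O=\mathbb Z[w]$ its ring of integers ($w^3+w^2-2w-1=0$). $K\otimes\mathbb R$ is identified with $\mathbb R^3$ via the three real embeddings; an element is totally positive if all three images are positive. *)

theory Defs
  imports "HOL-Analysis.Analysis"
begin

text \<open>K \<otimes> R is identified with R^3 via the three real embeddings, which send
  w = zeta_7 + zeta_7^(-1) to 2 cos(2 pi k/7), k = 1,2,3.  Ring operations in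
  K \<otimes> R are componentwise operations on real^3.\<close>

definition w_emb :: "real^3" where
  "w_emb = vector [2 * cos (2*pi/7), 2 * cos (4*pi/7), 2 * cos (6*pi/7)]"

definition ints_O :: "(real^3) set" where
  "ints_O = {of_int a + of_int b * w_emb + of_int c * w_emb^2 | a b c. True}"

definition totally_positive :: "real^3 \<Rightarrow> bool" where
  "totally_positive x \<longleftrightarrow> (\<forall>i. x $ i > 0)"

definition tot_pos_O :: "(real^3) set" where
  "tot_pos_O = {x \<in> ints_O. totally_positive x}"

definition units_O :: "(real^3) set" where
  "units_O = {u \<in> ints_O. \<exists>v \<in> ints_O. u * v = 1}"

definition tot_pos_units_O :: "(real^3) set" where
  "tot_pos_units_O = {u \<in> units_O. totally_positive u}"

definition triangle1 :: "(real^3) set" where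
  "triangle1 = convex hull {1, w_emb^2, (w_emb + 1)^2}"

definition triangle2 :: "(real^3) set" where
  "triangle2 = convex hull {1, w_emb + 2, (w_emb + 1)^2}"

end

theory Submission
  imports Defs
begin

abbreviation "w1 \<equiv> w_emb $ 1"
abbreviation "w2 \<equiv> w_emb $ 2"
abbreviation "w3 \<equiv> w_emb $ 3"

lemma w1_cos: "w1 = 2 * cos (2*pi/7)" by (simp add: w_emb_def)
lemma w2_cos: "w2 = 2 * cos (4*pi/7)" by (simp add: w_emb_def)
lemma w3_cos: "w3 = 2 * cos (6*pi/7)" by (simp add: w_emb_def)

lemma w2_eq: "w2 = w1^2 - 2"
proof -
  have "cos (4*pi/7) = cos (2*(2*pi/7))" by (simp add: field_simps)
  also have "\<dots> = 2 * cos (2*pi/7)^2 - 1" by (rule cos_double_cos)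
  finally show ?thesis by (simp add: w1_cos w2_cos power2_eq_square algebra_simps)
qed

lemma w3_eq: "w3 = w2^2 - 2"
proof -
  have "cos (6*pi/7) = cos (2*pi - 2*(4*pi/7))" by (simp add: field_simps)
  also have "\<dots> = cos (2*(4*pi/7))" by (rule cos_2pi_minus)
  also have "\<dots> = 2 * cos (4*pi/7)^2 - 1" by (rule cos_double_cos)
  finally show ?thesis by (simp add: w3_cos w2_cos power2_eq_square algebra_simps)
qed

lemma w1_range: "1 < w1 \<and> w1 < 3/2"
proof -
  have a: "cos (pi/3) < cos (2*pi/7)"
    by (subst cos_mono_less_eq) (auto simp: field_simps)
  have b: "cos (2*pi/7) < cos (pi/4)"
    by (subst cos_mono_less_eq) (auto simp: field_simps)
  have "sqrt 2 < 3/2" by (rule real_less_lsqrt) (auto simp: power2_eq_square)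
  then show ?thesis using a b by (simp add: w1_cos cos_60 cos_45)
qed

lemma w1_cubic: "w1^3 + w1^2 - 2*w1 - 1 = 0"
proof -
  define c where "c = cos (2*pi/7)"
  have "cos (3*(2*pi/7)) = cos (2*pi - 3*(2*pi/7))" by (rule cos_2pi_minus[symmetric])
  also have "2*pi - 3*(2*pi/7) = 2*(2*(2*pi/7))" by (simp add: field_simps)
  finally have "cos (3*(2*pi/7)) = cos (2*(2*(2*pi/7)))" .
  then have "4*c^3 - 3*c = 2*(2*c^2-1)^2 - 1"
    unfolding c_def cos_treble_cos cos_double_cos by simp
  then have e: "(2*c - 2) * ((2*c)^3 + (2*c)^2 - 2*(2*c) - 1) = 0"
    by (simp add: algebra_simps power2_eq_square power3_eq_cube)
  have "2*c \<noteq> 2" using w1_range by (simp add: w1_cos c_def)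
  then show ?thesis using e by (simp add: w1_cos c_def)
qed

lemma w1_cyc: "w1 = w3^2 - 2"
  using w1_cubic w2_eq w3_eq by algebra

lemma psums: "w1 + w2 + w3 = -1" "w1^2 + w2^2 + w3^2 = 5"
  "w1^3 + w2^3 + w3^3 = -4" "w1^4 + w2^4 + w3^4 = 13"
  using w1_cubic w2_eq w3_eq by algebra+

lemma cubics: "w2^3 + w2^2 - 2*w2 - 1 = 0" "w3^3 + w3^2 - 2*w3 - 1 = 0"
  using w1_cubic w2_eq w3_eq by algebra+

lemma trace_id:
  fixes m0 m1 m2 a b c :: real
  shows "(m0 + m1*w1 + m2*w1^2)*(a + b*w1 + c*w1^2) + (m0 + m1*w2 + m2*w2^2)*(a + b*w2 + c*w2^2)
       + (m0 + m1*w3 + m2*w3^2)*(a + b*w3 + c*w3^2)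
     = a*(3*m0 - m1 + 5*m2) + b*(-m0 + 5*m1 - 4*m2) + c*(5*m0 - 4*m1 + 13*m2)"
proof -
  have "(m0 + m1*w1 + m2*w1^2)*(a + b*w1 + c*w1^2) + (m0 + m1*w2 + m2*w2^2)*(a + b*w2 + c*w2^2)
       + (m0 + m1*w3 + m2*w3^2)*(a + b*w3 + c*w3^2) = 3*(m0*a) + (m0*b+m1*a)*(w1+w2+w3) + (m0*c+m1*b+m2*a)*(w1^2+w2^2+w3^2)
     + (m1*c+m2*b)*(w1^3+w2^3+w3^3) + (m2*c)*(w1^4+w2^4+w3^4)"
    by (simp add: algebra_simps power2_eq_square power3_eq_cube power4_eq_xxxx)
  also have "\<dots> = a*(3*m0 - m1 + 5*m2) + b*(-m0 + 5*m1 - 4*m2) + c*(5*m0 - 4*m1 + 13*m2)"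
    unfolding psums by (simp add: algebra_simps)
  finally show ?thesis .
qed

lemma q_mono_aux:
  fixes y t :: real
  assumes "1 \<le> y" "y \<le> t"
  shows "y^3 + y^2 - 2*y - 1 \<le> t^3 + t^2 - 2*t - 1"
proof -
  have e: "(t^3 + t^2 - 2*t - 1) - (y^3 + y^2 - 2*y - 1) = (t - y)*(t*t + t*y + y*y + t + y - 2)"
    by (simp add: algebra_simps power2_eq_square power3_eq_cube)
  have "1*1 \<le> t*t" "1*1 \<le> y*y" "1*1 \<le> t*y" using assms
    by (intro mult_mono; linarith)+
  then have "t*t + t*y + y*y + t + y - 2 \<ge> 0" using assms by linarith
  then have "(t - y)*(t*t + t*y + y*y + t + y - 2) \<ge> 0" using assms by simp
  then show ?thesis using e by linarith
qed

lemma w1_bounds: "1.246979603 < w1" "w1 < 1.246979604"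
proof -
  show "1.246979603 < w1"
  proof (rule ccontr)
    assume "\<not> ?thesis"
    then have "w1^3 + w1^2 - 2*w1 - 1 \<le> (1.246979603::real)^3 + 1.246979603^2 - 2*1.246979603 - 1"
      using w1_range by (intro q_mono_aux) auto
    moreover have "(1.246979603::real)^3 + 1.246979603^2 - 2*1.246979603 - 1 < 0"
      by (simp add: power2_eq_square power3_eq_cube)
    ultimately show False using w1_cubic by linarith
  qed
  show "w1 < 1.246979604"
  proof (rule ccontr)
    assume "\<not> ?thesis"
    then have "(1.246979604::real)^3 + 1.246979604^2 - 2*1.246979604 - 1 \<le> w1^3 + w1^2 - 2*w1 - 1"
      by (intro q_mono_aux) auto
    moreover have "(1.246979604::real)^3 + 1.246979604^2 - 2*1.246979604 - 1 > 0"
      by (simp add: power2_eq_square power3_eq_cube)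
    ultimately show False using w1_cubic by linarith
  qed
qed

lemma w2_bounds: "-0.44504187 < w2" "w2 < -0.44504186"
proof -
  have "(1.246979603::real)^2 < w1^2" using w1_bounds by (intro power_strict_mono) auto
  moreover have "w1^2 < (1.246979604::real)^2" using w1_bounds w1_range by (intro power_strict_mono) auto
  moreover have "(1.246979603::real)^2 - 2 > -0.44504187" "(1.246979604::real)^2 - 2 < -0.44504186"
    by (simp_all add: power2_eq_square)
  ultimately show "-0.44504187 < w2" "w2 < -0.44504186" unfolding w2_eq by linarith+
qed

lemma w3_bounds: "-1.80193775 < w3" "w3 < -1.80193773"
proof -
  have "(0.44504186::real)^2 < (-w2)^2" using w2_bounds by (intro power_strict_mono) auto
  moreover have "(-w2)^2 < (0.44504187::real)^2" using w2_bounds by (intro power_strict_mono) auto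
  moreover have "(0.44504186::real)^2 - 2 > -1.80193775" "(0.44504187::real)^2 - 2 < -1.80193773"
    by (simp_all add: power2_eq_square)
  ultimately show "-1.80193775 < w3" "w3 < -1.80193773" unfolding w3_eq by simp_all
qed

lemma wb: "(1246979603/1000000000::real) < w1" "w1 < 1246979604/1000000000"
  "-44504187/100000000 < w2" "w2 < -44504186/100000000"
  "-180193775/100000000 < w3" "w3 < -180193773/100000000"
  using w1_bounds w2_bounds w3_bounds by simp_all

lemma vec_power_nth: "((x::real^'n) ^ n) $ i = (x $ i) ^ n"
  by (induct n) simp_all

lemma vec_of_int_nth: "(of_int k :: real^'n) $ i = of_int k"
proof -
  have "(of_int k :: real^'n) = of_real (of_int k)" by simp
  also have "\<dots> = (of_int k :: real) *\<^sub>R 1" by (simp only: of_real_def)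
  finally show ?thesis by simp
qed

definition eltv :: "int \<Rightarrow> int \<Rightarrow> int \<Rightarrow> real^3" where
  "eltv a b c = of_int a + of_int b * w_emb + of_int c * w_emb^2"

lemma ints_O_iff: "x \<in> ints_O \<longleftrightarrow> (\<exists>a b c. x = eltv a b c)"
  by (auto simp: ints_O_def eltv_def)

lemma eltv_nth: "(eltv a b c) $ i = of_int a + of_int b * w_emb$i + of_int c * (w_emb$i)^2"
  by (simp add: eltv_def vec_power_nth vec_of_int_nth)

lemma sq_cyc: "w1^2 = w2 + 2" "w2^2 = w3 + 2" "w3^2 = w1 + 2"
  using w2_eq w3_eq w1_cyc by linarith+

lemma eltv_comp: "(eltv a b c) $ 1 = of_int a + of_int b * w1 + of_int c * (w2 + 2)"
  "(eltv a b c) $ 2 = of_int a + of_int b * w2 + of_int c * (w3 + 2)"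
  "(eltv a b c) $ 3 = of_int a + of_int b * w3 + of_int c * (w1 + 2)"
  by (simp_all add: eltv_nth sq_cyc)

lemma cubic_all: "(w_emb$i)^3 + (w_emb$i)^2 - 2*(w_emb$i) - 1 = 0"
  using exhaust_3[of i] w1_cubic cubics by auto

lemma eltv_mult: "eltv a b c * eltv d e f =
   eltv (a*d + (b*f+c*e) - c*f) (a*e+b*d + 2*(b*f+c*e) - c*f) (a*f+b*e+c*d - (b*f+c*e) + 3*(c*f))"
proof -
  have "\<And>t::real. t^3 + t^2 - 2*t - 1 = 0 \<Longrightarrow> \<forall>a b c d e f::real.
     (a + b*t + c*t^2) * (d + e*t + f*t^2) = (a*d + (b*f+c*e) - c*f) + (a*e+b*d + 2*(b*f+c*e) - c*f)*t
        + (a*f+b*e+c*d - (b*f+c*e) + 3*(c*f))*t^2"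
  proof (intro allI)
    fix t a b c d e f :: real assume q: "t^3 + t^2 - 2*t - 1 = 0"
    have "(a + b*t + c*t^2) * (d + e*t + f*t^2) - ((a*d + (b*f+c*e) - c*f) + (a*e+b*d + 2*(b*f+c*e) - c*f)*t
        + (a*f+b*e+c*d - (b*f+c*e) + 3*(c*f))*t^2) = (b*f+c*e+c*f*(t-1))*(t^3 + t^2 - 2*t - 1)"
      by (simp add: algebra_simps power2_eq_square power3_eq_cube)
    then show "(a + b*t + c*t^2) * (d + e*t + f*t^2) = (a*d + (b*f+c*e) - c*f) + (a*e+b*d + 2*(b*f+c*e) - c*f)*t
        + (a*f+b*e+c*d - (b*f+c*e) + 3*(c*f))*t^2" using q by simp
  qed
  from this[OF cubic_all] show ?thesis
    by (simp add: vec_eq_iff eltv_nth)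
qed

lemma eltv_1: "eltv 1 0 0 = 1" by (simp add: eltv_def)
lemma eltv_w2: "eltv 0 0 1 = w_emb^2" by (simp add: eltv_def)
lemma eltv_w12: "eltv 1 2 1 = (w_emb + 1)^2" by (simp add: eltv_def power2_eq_square algebra_simps)
lemma eltv_w2p: "eltv 2 1 0 = w_emb + 2" by (simp add: eltv_def algebra_simps)

definition eltr :: "real \<Rightarrow> real \<Rightarrow> real \<Rightarrow> real^3" where
  "eltr m0 m1 m2 = m0 *\<^sub>R 1 + m1 *\<^sub>R w_emb + m2 *\<^sub>R w_emb^2"

lemma eltr_nth: "(eltr m0 m1 m2) $ i = m0 + m1 * w_emb$i + m2 * (w_emb$i)^2"
  by (simp add: eltr_def vec_power_nth)

lemma inner3: "inner (x::real^3) y = x$1 * y$1 + x$2 * y$2 + x$3 * y$3"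
  by (simp add: inner_vec_def sum_3)

lemma trace_eltr: "inner (eltr m0 m1 m2) (eltv a b c) =
   of_int a*(3*m0 - m1 + 5*m2) + of_int b*(-m0 + 5*m1 - 4*m2) + of_int c*(5*m0 - 4*m1 + 13*m2)"
  unfolding inner3 eltr_nth eltv_nth by (rule trace_id)

lemma cert:
  fixes a b c m0 m1 m2 :: real
  assumes "0 < a + b*w1 + c*w1^2" "0 < a + b*w2 + c*w2^2" "0 < a + b*w3 + c*w3^2"
    "0 < m0 + m1*w1 + m2*w1^2" "0 < m0 + m1*w2 + m2*w2^2" "0 < m0 + m1*w3 + m2*w3^2"
  shows "0 < a*(3*m0 - m1 + 5*m2) + b*(-m0 + 5*m1 - 4*m2) + c*(5*m0 - 4*m1 + 13*m2)"
proof -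
  have "0 < (m0 + m1*w1 + m2*w1^2)*(a + b*w1 + c*w1^2) + (m0 + m1*w2 + m2*w2^2)*(a + b*w2 + c*w2^2)
       + (m0 + m1*w3 + m2*w3^2)*(a + b*w3 + c*w3^2)"
    using mult_pos_pos[OF assms(4) assms(1)] mult_pos_pos[OF assms(5) assms(2)] mult_pos_pos[OF assms(6) assms(3)]
    by linarith
  then show ?thesis by (simp only: trace_id)
qed

lemma cert':
  fixes a b c :: int and m0 m1 m2 :: real
  assumes "0 < (eltv a b c)$1" "0 < (eltv a b c)$2" "0 < (eltv a b c)$3"
    "0 < m0 + m1*w1 + m2*(w2+2)" "0 < m0 + m1*w2 + m2*(w3+2)" "0 < m0 + m1*w3 + m2*(w1+2)"
  shows "0 < of_int a*(3*m0 - m1 + 5*m2) + of_int b*(-m0 + 5*m1 - 4*m2) + of_int c*(5*m0 - 4*m1 + 13*m2)"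
  using assms by (intro cert) (simp_all add: eltv_nth sq_cyc)

lemma certc:
  fixes a b c :: int and mA mB mC t0 t1 t2 :: real
  assumes "0 < (eltv a b c)$1" "0 < (eltv a b c)$2" "0 < (eltv a b c)$3"
    "0 < mA + 2*mC + mB*w1 + mC*w2" "0 < mA + 2*mC + mB*w2 + mC*w3" "0 < mA + 2*mC + mB*w3 + mC*w1"
    "t0 = 3*mA - mB + 5*mC" "t1 = -mA + 5*mB - 4*mC" "t2 = 5*mA - 4*mB + 13*mC"
  shows "0 < of_int a * t0 + of_int b * t1 + of_int c * t2"
proof -
  have "0 < mA + mB*w1 + mC*(w2+2)" "0 < mA + mB*w2 + mC*(w3+2)" "0 < mA + mB*w3 + mC*(w1+2)"
    using assms(4-6) by (simp_all add: algebra_simps)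
  from cert'[OF assms(1-3) this] show ?thesis using assms(7-9) by simp
qed

lemma partA1:
  fixes a b c :: int
  assumes p: "0 < (eltv a b c)$1" "0 < (eltv a b c)$2" "0 < (eltv a b c)$3"
    and L: "of_int a - of_int b / 2 + of_int c \<le> (1::real)"
  shows "(a,b,c) \<in> {(1,0,0),(0,0,1),(1,2,1)}"
proof -
  have "(0::real) < of_int a * (1/2) + of_int b * (-3/4) + of_int c * (3/2)"
    by (rule certc[OF p, where mA="(-1/28)" and mB="(-1/14)" and mC="(3/28)"]) (use wb in linarith)+
  then have "real_of_int a < 2" using L by linarith
  then have b0: "a < 2" by simp
  have "(0::real) < of_int a * (2) + of_int b * (-1/2) + of_int c * (1)"
    by (rule certc[OF p, where mA="(23/14)" and mB="(-2/7)" and mC="(-9/14)"]) (use wb in linarith)+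
  then have "real_of_int a > -1" using L by linarith
  then have b1: "a > -1" by simp
  have "(0::real) < of_int a * (4) + of_int b * (-3) + of_int c * (4)"
    by (rule certc[OF p, where mA="(19/7)" and mB="(-6/7)" and mC="(-1)"]) (use wb in linarith)+
  then have "real_of_int b < 4" using L by linarith
  then have b2: "b < 4" by simp
  have "(0::real) < of_int a * (1) + of_int b * (1/2) + of_int c * (1)"
    by (rule certc[OF p, where mA="(1/2)" and mB="(1/7)" and mC="(-1/14)"]) (use wb in linarith)+
  then have "real_of_int b > -1" using L by linarith
  then have b3: "b > -1" by simp
  have "(0::real) < of_int a * (2) + of_int b * (-1) + of_int c * (1)"
    by (rule certc[OF p, where mA="(12/7)" and mB="(-3/7)" and mC="(-5/7)"]) (use wb in linarith)+
  then have "real_of_int c < 2" using L by linarith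
  then have b4: "c < 2" by simp
  have "(0::real) < of_int a * (1) + of_int b * (-1/2) + of_int c * (2)"
    by (rule certc[OF p, where mA="(3/14)" and mB="(0)" and mC="(1/14)"]) (use wb in linarith)+
  then have "real_of_int c > -1" using L by linarith
  then have b5: "c > -1" by simp
  have da: "a = 0 \<or> a = 1" using b0 b1 b2 b3 b4 b5 by arith
  have db: "b = 0 \<or> b = 1 \<or> b = 2 \<or> b = 3" using b0 b1 b2 b3 b4 b5 by arith
  have dc: "c = 0 \<or> c = 1" using b0 b1 b2 b3 b4 b5 by arith
  from da db dc p L show ?thesis
    unfolding eltv_comp using wb by (elim disjE; simp add: algebra_simps)
qed

lemma partA2:
  fixes a b c :: int
  assumes p: "0 < (eltv a b c)$1" "0 < (eltv a b c)$2" "0 < (eltv a b c)$3"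
    and L: "of_int a - of_int b + 2 * of_int c \<le> (1::real)"
  shows "(a,b,c) \<in> {(1,0,0),(2,1,0),(1,2,1)}"
proof -
  have "(0::real) < of_int a * (2) + of_int b * (-3) + of_int c * (6)"
    by (rule certc[OF p, where mA="(-1/7)" and mB="(-2/7)" and mC="(3/7)"]) (use wb in linarith)+
  then have "real_of_int a < 3" using L by linarith
  then have b0: "a < 3" by simp
  have "(0::real) < of_int a * (2) + of_int b * (-1) + of_int c * (2)"
    by (rule certc[OF p, where mA="(9/7)" and mB="(-2/7)" and mC="(-3/7)"]) (use wb in linarith)+
  then have "real_of_int a > -1" using L by linarith
  then have b1: "a > -1" by simp
  have "(0::real) < of_int a * (5) + of_int b * (-6) + of_int c * (10)"
    by (rule certc[OF p, where mA="(11/7)" and mB="(-1)" and mC="(-1/7)"]) (use wb in linarith)+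
  then have "real_of_int b < 5" using L by linarith
  then have b2: "b < 5" by simp
  have "(0::real) < of_int a * (1) + of_int b * (0) + of_int c * (2)"
    by (rule certc[OF p, where mA="(1/7)" and mB="(1/7)" and mC="(1/7)"]) (use wb in linarith)+
  then have "real_of_int b > -1" using L by linarith
  then have b3: "b > -1" by simp
  have "(0::real) < of_int a * (2) + of_int b * (-2) + of_int c * (3)"
    by (rule certc[OF p, where mA="(1)" and mB="(-3/7)" and mC="(-2/7)"]) (use wb in linarith)+
  then have "real_of_int c < 2" using L by linarith
  then have b4: "c < 2" by simp
  have "(0::real) < of_int a * (2) + of_int b * (-2) + of_int c * (5)"
    by (rule certc[OF p, where mA="(1/7)" and mB="(-1/7)" and mC="(2/7)"]) (use wb in linarith)+
  then have "real_of_int c > -2" using L by linarith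
  then have b5: "c > -2" by simp
  have da: "a = 0 \<or> a = 1 \<or> a = 2" using b0 b1 b2 b3 b4 b5 by arith
  have db: "b = 0 \<or> b = 1 \<or> b = 2 \<or> b = 3 \<or> b = 4" using b0 b1 b2 b3 b4 b5 by arith
  have dc: "c = -1 \<or> c = 0 \<or> c = 1" using b0 b1 b2 b3 b4 b5 by arith
  from da db dc p L show ?thesis
    unfolding eltv_comp using wb by (elim disjE; simp add: algebra_simps)
qed

lemma inner_comb3: "(A::real^3) \<bullet> (c1 *\<^sub>R P1 + c2 *\<^sub>R P2 + c3 *\<^sub>R P3) = c1*(A\<bullet>P1) + c2*(A\<bullet>P2) + c3*(A\<bullet>P3)"
  by (simp add: inner_add_right)

locale tri =
  fixes P1 P2 P3 A0 A1 A2 A3 :: "real^3"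
  assumes h0: "A0\<bullet>P1 = 1" "A0\<bullet>P2 = 1" "A0\<bullet>P3 = 1"
   and h1: "A1\<bullet>P1 > 1" "A1\<bullet>P2 = 1" "A1\<bullet>P3 = 1"
   and h2: "A2\<bullet>P1 = 1" "A2\<bullet>P2 > 1" "A2\<bullet>P3 = 1"
   and h3: "A3\<bullet>P1 = 1" "A3\<bullet>P2 = 1" "A3\<bullet>P3 > 1"
begin

lemma dist: "P1 \<noteq> P2" "P1 \<noteq> P3" "P2 \<noteq> P3"
  using h1 h2 by auto

lemma coef_zero:
  assumes "c1 *\<^sub>R P1 + c2 *\<^sub>R P2 + c3 *\<^sub>R P3 = 0"
  shows "c1 = 0 \<and> c2 = 0 \<and> c3 = 0"
proof -
  have e0: "c1 + c2 + c3 = 0" using inner_comb3[of A0 c1 P1 c2 P2 c3 P3] assms h0 by simp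
  have e1: "c1*(A1\<bullet>P1) + c2 + c3 = 0" using inner_comb3[of A1 c1 P1 c2 P2 c3 P3] assms h1 by simp
  have e2: "c1 + c2*(A2\<bullet>P2) + c3 = 0" using inner_comb3[of A2 c1 P1 c2 P2 c3 P3] assms h2 by simp
  have e3: "c1 + c2 + c3*(A3\<bullet>P3) = 0" using inner_comb3[of A3 c1 P1 c2 P2 c3 P3] assms h3 by simp
  have "c1*(A1\<bullet>P1 - 1) = 0" using e0 e1 right_diff_distrib[of c1 "A1\<bullet>P1" 1] by linarith
  then have "c1 = 0" using h1 by simp
  moreover have "c2*(A2\<bullet>P2 - 1) = 0" using e0 e2 right_diff_distrib[of c2 "A2\<bullet>P2" 1] by linarith
  then have "c2 = 0" using h2 by simp
  moreover have "c3*(A3\<bullet>P3 - 1) = 0" using e0 e3 right_diff_distrib[of c3 "A3\<bullet>P3" 1] by linarith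
  then have "c3 = 0" using h3 by simp
  ultimately show ?thesis by simp
qed

lemma sum3: "(\<Sum>v\<in>{P1,P2,P3}. u v *\<^sub>R v) = u P1 *\<^sub>R P1 + u P2 *\<^sub>R P2 + u P3 *\<^sub>R P3"
  using dist by (simp add: algebra_simps)

lemma card3: "card {P1,P2,P3} = 3"
  using dist by simp

lemma not_aff_dep: "\<not> affine_dependent {P1,P2,P3}"
proof
  assume "affine_dependent {P1,P2,P3}"
  then obtain u where "(\<exists>v\<in>{P1,P2,P3}. u v \<noteq> 0)" "(\<Sum>v\<in>{P1,P2,P3}. u v *\<^sub>R v) = 0"
    by (auto simp: affine_dependent_explicit_finite)
  then show False using coef_zero[of "u P1" "u P2" "u P3"] by (auto simp: sum3)
qed

lemma indep: "independent {P1,P2,P3}"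
proof
  assume "dependent {P1,P2,P3}"
  then obtain u where "(\<exists>v\<in>{P1,P2,P3}. u v \<noteq> 0)" "(\<Sum>v\<in>{P1,P2,P3}. u v *\<^sub>R v) = 0"
    by (auto simp: dependent_finite)
  then show False using coef_zero[of "u P1" "u P2" "u P3"] by (auto simp: sum3)
qed

lemma aff_dim2: "aff_dim {P1,P2,P3} = 2"
  using aff_dim_affine_independent[OF not_aff_dep] card3 by simp

lemma spanU: "span {P1,P2,P3} = UNIV"
proof -
  have "dim {P1,P2,P3} = 3" using dim_eq_card_independent[OF indep] card3 by simp
  then show ?thesis using dim_eq_full[of "{P1,P2,P3}"] by simp
qed

lemma in_hull:
  assumes "A0\<bullet>q = 1" "A1\<bullet>q \<ge> 1" "A2\<bullet>q \<ge> 1" "A3\<bullet>q \<ge> 1"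
  shows "q \<in> convex hull {P1,P2,P3}"
proof -
  have "q \<in> span {P1,P2,P3}" using spanU by simp
  then obtain u where q: "q = u P1 *\<^sub>R P1 + u P2 *\<^sub>R P2 + u P3 *\<^sub>R P3"
    by (auto simp: span_finite sum3)
  define t1 where "t1 = u P1"
  define t2 where "t2 = u P2"
  define t3 where "t3 = u P3"
  have q': "q = t1 *\<^sub>R P1 + t2 *\<^sub>R P2 + t3 *\<^sub>R P3" using q t1_def t2_def t3_def by simp
  have e0: "t1 + t2 + t3 = 1" using inner_comb3[of A0 t1 P1 t2 P2 t3 P3] assms(1) h0 q' by simp
  have e1: "t1*(A1\<bullet>P1) + t2 + t3 \<ge> 1" using inner_comb3[of A1 t1 P1 t2 P2 t3 P3] assms(2) h1 q' by simp
  have e2: "t1 + t2*(A2\<bullet>P2) + t3 \<ge> 1" using inner_comb3[of A2 t1 P1 t2 P2 t3 P3] assms(3) h2 q' by simp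
  have e3: "t1 + t2 + t3*(A3\<bullet>P3) \<ge> 1" using inner_comb3[of A3 t1 P1 t2 P2 t3 P3] assms(4) h3 q' by simp
  have "t1*(A1\<bullet>P1 - 1) \<ge> 0" using e0 e1 right_diff_distrib[of t1 "A1\<bullet>P1" 1] by linarith
  then have "t1 \<ge> 0" using h1 by (simp add: zero_le_mult_iff)
  moreover have "t2*(A2\<bullet>P2 - 1) \<ge> 0" using e0 e2 right_diff_distrib[of t2 "A2\<bullet>P2" 1] by linarith
  then have "t2 \<ge> 0" using h2 by (simp add: zero_le_mult_iff)
  moreover have "t3*(A3\<bullet>P3 - 1) \<ge> 0" using e0 e3 right_diff_distrib[of t3 "A3\<bullet>P3" 1] by linarith
  then have "t3 \<ge> 0" using h3 by (simp add: zero_le_mult_iff)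
  ultimately show ?thesis unfolding convex_hull_3 using q' e0 by blast
qed

end

definition alph :: "int \<Rightarrow> real^3" where
 "alph k = (if k = 1 then eltr (9/14) (-1/7) (-3/14) else eltr (2/7) (-1/7) 0)"

lemma alph1_val: "alph 1 \<bullet> eltv a b c = of_int a - of_int b / 2 + of_int c"
  unfolding alph_def by (simp add: trace_eltr)
lemma alph2_val: "alph 2 \<bullet> eltv a b c = of_int a - of_int b + 2 * of_int c"
  unfolding alph_def by (simp add: trace_eltr)

definition Vs :: "int \<Rightarrow> (real^3) set" where
 "Vs k = (if k = 1 then {eltv 1 0 0, eltv 0 0 1, eltv 1 2 1} else {eltv 1 0 0, eltv 2 1 0, eltv 1 2 1})"

lemma tri_eq: "triangle1 = convex hull Vs 1" "triangle2 = convex hull Vs 2"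
  by (simp_all add: triangle1_def triangle2_def Vs_def eltv_1 eltv_w2 eltv_w12 eltv_w2p)

lemma tp_iff: "totally_positive x \<longleftrightarrow> 0 < x$1 \<and> 0 < x$2 \<and> 0 < x$3"
  unfolding totally_positive_def forall_3 ..

lemma tpO_iff: "x \<in> tot_pos_O \<longleftrightarrow> (\<exists>a b c. x = eltv a b c \<and> 0 < x$1 \<and> 0 < x$2 \<and> 0 < x$3)"
  by (auto simp: tot_pos_O_def ints_O_iff tp_iff)

lemma partA:
  assumes k: "k \<in> {1,2}" and x: "x \<in> tot_pos_O"
  shows "1 \<le> alph k \<bullet> x" "alph k \<bullet> x = 1 \<Longrightarrow> x \<in> Vs k"
proof -
  obtain a b c where xe: "x = eltv a b c" and p: "0 < (eltv a b c)$1" "0 < (eltv a b c)$2" "0 < (eltv a b c)$3"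
    using x by (auto simp: tpO_iff)
  have "1 \<le> alph k \<bullet> x \<and> (alph k \<bullet> x = 1 \<longrightarrow> x \<in> Vs k)"
  proof (cases "k = 1")
    case True
    show ?thesis
    proof (cases "alph k \<bullet> x \<le> 1")
      case le: True
      then have "(a,b,c) \<in> {(1,0,0),(0,0,1),(1,2,1)}"
        using partA1[OF p] True xe alph1_val by simp
      then show ?thesis using True xe by (auto simp: alph1_val Vs_def)
    qed auto
  next
    case False
    then have k2: "k = 2" using k by simp
    show ?thesis
    proof (cases "alph k \<bullet> x \<le> 1")
      case le: True
      then have "(a,b,c) \<in> {(1,0,0),(2,1,0),(1,2,1)}"
        using partA2[OF p] k2 xe alph2_val by simp
      then show ?thesis using k2 xe by (auto simp: alph2_val Vs_def)
    qed auto
  qed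
  then show "1 \<le> alph k \<bullet> x" "alph k \<bullet> x = 1 \<Longrightarrow> x \<in> Vs k" by auto
qed

lemma Vs_val: "k \<in> {1,2} \<Longrightarrow> y \<in> Vs k \<Longrightarrow> alph k \<bullet> y = 1"
  by (auto simp: Vs_def alph1_val alph2_val)

lemma eltv_tpO: "0 < (eltv a b c)$1 \<Longrightarrow> 0 < (eltv a b c)$2 \<Longrightarrow> 0 < (eltv a b c)$3 \<Longrightarrow> eltv a b c \<in> tot_pos_O"
  unfolding tpO_iff by blast

lemma Vs_tp: "k \<in> {1,2} \<Longrightarrow> Vs k \<subseteq> tot_pos_O"
  unfolding Vs_def using wb by (auto intro!: eltv_tpO simp: eltv_comp)

lemma ints_mult: "x \<in> ints_O \<Longrightarrow> y \<in> ints_O \<Longrightarrow> x * y \<in> ints_O"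
  unfolding ints_O_iff using eltv_mult by blast

lemma tp_mult: "x \<in> tot_pos_O \<Longrightarrow> y \<in> tot_pos_O \<Longrightarrow> x * y \<in> tot_pos_O"
  unfolding tot_pos_O_def tp_iff using ints_mult by auto

abbreviation "U \<equiv> tot_pos_units_O"

lemma U_sub: "U \<subseteq> tot_pos_O"
  by (auto simp: tot_pos_units_O_def tot_pos_O_def units_O_def)

lemma U_inv: assumes "u \<in> U" obtains v where "v \<in> U" "u * v = 1" "v * u = 1"
proof -
  obtain v where v: "v \<in> ints_O" "u * v = 1" "u \<in> ints_O" "totally_positive u"
    using assms by (auto simp: tot_pos_units_O_def units_O_def)
  have "\<And>i. (u * v)$i = 1" using v by simp
  then have "\<And>i. u$i * v$i = 1" by simp
  moreover have "\<And>i. 0 < u$i" using v by (simp add: totally_positive_def)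
  ultimately have "\<And>i. 0 < v$i" by (metis mult_pos_pos zero_less_mult_pos zero_less_one)
  then have "v \<in> U" using v by (auto simp: tot_pos_units_O_def units_O_def totally_positive_def mult.commute intro!: bexI[of _ u])
  then show ?thesis using that v by (simp add: mult.commute)
qed

lemma U_mult: assumes "u \<in> U" "v \<in> U" shows "u * v \<in> U"
proof -
  obtain u' v' where "u' \<in> U" "u * u' = 1" "v' \<in> U" "v * v' = 1" using assms U_inv by metis
  then have "(u * v) * (v' * u') = 1" by (metis mult.assoc mult.commute mult_1_right)
  moreover have "v' * u' \<in> ints_O" using \<open>u' \<in> U\<close> \<open>v' \<in> U\<close> ints_mult by (auto simp: tot_pos_units_O_def units_O_def)
  moreover have "u * v \<in> tot_pos_O" using assms U_sub tp_mult by blast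
  ultimately show ?thesis by (auto simp: tot_pos_units_O_def units_O_def tot_pos_O_def)
qed


lemma U_eltv: assumes "eltv a b c * eltv d e f = 1" "0 < (eltv a b c)$1" "0 < (eltv a b c)$2" "0 < (eltv a b c)$3"
  shows "eltv a b c \<in> U"
  using assms by (auto simp: tot_pos_units_O_def units_O_def tp_iff ints_O_iff intro!: bexI[of _ "eltv d e f"]) blast

lemma U_one: "1 \<in> U"
  using U_eltv[of 1 0 0 1 0 0] by (simp add: eltv_mult eltv_1)

lemma inner_mult: "(a::real^3) \<bullet> (b * x) = (a * b) \<bullet> x"
  by (simp add: inner3 algebra_simps)

lemma e1_U: "eltv 2 1 0 \<in> U" by (rule U_eltv[of _ _ _ 0 "-1" 1]) (use wb in \<open>simp_all add: eltv_mult eltv_1 eltv_comp\<close>)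
lemma e1i_U: "eltv 0 (-1) 1 \<in> U" by (rule U_eltv[of _ _ _ 2 1 0]) (use wb in \<open>simp_all add: eltv_mult eltv_1 eltv_comp\<close>)
lemma e2_U: "eltv 0 0 1 \<in> U" by (rule U_eltv[of _ _ _ 5 "-1" "-2"]) (use wb in \<open>simp_all add: eltv_mult eltv_1 eltv_comp\<close>)
lemma e2i_U: "eltv 5 (-1) (-2) \<in> U" by (rule U_eltv[of _ _ _ 0 0 1]) (use wb in \<open>simp_all add: eltv_mult eltv_1 eltv_comp\<close>)
lemma e12i_U: "eltv 3 (-1) (-1) \<in> U" by (rule U_eltv[of _ _ _ 1 2 1]) (use wb in \<open>simp_all add: eltv_mult eltv_1 eltv_comp\<close>)

lemma hull_slice:
  fixes S :: "(real^3) set"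
  assumes ge: "\<And>x. x \<in> S \<Longrightarrow> b \<le> a \<bullet> x"
  shows "convex hull S \<inter> {x. a \<bullet> x = b} = convex hull (S \<inter> {x. a \<bullet> x = b})"
proof
  show "convex hull (S \<inter> {x. a \<bullet> x = b}) \<subseteq> convex hull S \<inter> {x. a \<bullet> x = b}"
  proof -
    have "convex hull (S \<inter> {x. a \<bullet> x = b}) \<subseteq> convex hull S" by (rule hull_mono) auto
    moreover have "convex hull (S \<inter> {x. a \<bullet> x = b}) \<subseteq> {x. a \<bullet> x = b}"
      by (rule hull_minimal) (auto simp: convex_hyperplane)
    ultimately show ?thesis by blast
  qed
next
  show "convex hull S \<inter> {x. a \<bullet> x = b} \<subseteq> convex hull (S \<inter> {x. a \<bullet> x = b})"
  proof
    fix x assume "x \<in> convex hull S \<inter> {x. a \<bullet> x = b}"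
    then obtain T u where T: "finite T" "T \<subseteq> S" "\<forall>v\<in>T. 0 \<le> u v" "sum u T = 1"
      "(\<Sum>v\<in>T. u v *\<^sub>R v) = x" and ax: "a \<bullet> x = b"
      unfolding convex_hull_explicit by blast
    have "a \<bullet> x = (\<Sum>v\<in>T. u v * (a \<bullet> v))" using T(5) by (auto simp: inner_sum_right)
    moreover have "b = (\<Sum>v\<in>T. u v * b)" using T(4) by (metis mult_1_left sum_distrib_right)
    ultimately have sz: "(\<Sum>v\<in>T. u v * (a \<bullet> v - b)) = 0" using ax
      by (simp add: right_diff_distrib sum_subtractf)
    have nn: "\<forall>v\<in>T. 0 \<le> u v * (a \<bullet> v - b)"
    proof
      fix v assume "v \<in> T"
      then have "0 \<le> u v" "b \<le> a \<bullet> v" using T(2,3) ge by auto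
      then show "0 \<le> u v * (a \<bullet> v - b)" by simp
    qed
    have z: "\<forall>v\<in>T. u v * (a \<bullet> v - b) = 0"
      using sum_nonneg_eq_0_iff[OF T(1), of "\<lambda>v. u v * (a \<bullet> v - b)"] nn sz by simp
    define T' where "T' = {v\<in>T. a \<bullet> v = b}"
    have z2: "\<forall>v\<in>T - T'. u v = 0" using z by (auto simp: T'_def)
    have fT': "finite T'" "T' \<subseteq> T" using T(1) by (auto simp: T'_def)
    have "sum u T' = 1" using sum.mono_neutral_left[OF T(1) fT'(2), of u] z2 T(4) by simp
    moreover have "(\<Sum>v\<in>T'. u v *\<^sub>R v) = x"
      using sum.mono_neutral_left[OF T(1) fT'(2), of "\<lambda>v. u v *\<^sub>R v"] z2 T(5) by simp
    moreover have "T' \<subseteq> S \<inter> {x. a \<bullet> x = b}" using T(2) by (auto simp: T'_def)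
    ultimately show "x \<in> convex hull (S \<inter> {x. a \<bullet> x = b})"
      unfolding convex_hull_explicit using fT' T(3) by blast
  qed
qed

abbreviation "C \<equiv> convex hull tot_pos_O"

lemma convex_pos: "convex {x::real^3. \<forall>i. 0 < x$i}"
proof (rule convexI)
  fix x y :: "real^3" and u v :: real
  assume "x \<in> {x. \<forall>i. 0 < x$i}" "y \<in> {x. \<forall>i. 0 < x$i}" "0 \<le> u" "0 \<le> v" "u + v = 1"
  then show "u *\<^sub>R x + v *\<^sub>R y \<in> {x. \<forall>i. 0 < x$i}"
  proof (clarsimp)
    fix i
    have "0 < x$i" "0 < y$i" using \<open>x \<in> _\<close> \<open>y \<in> _\<close> by auto
    show "0 < u * x$i + v * y$i"
    proof (cases "u = 0")
      case True then show ?thesis using \<open>u + v = 1\<close> \<open>0 < y$i\<close> by simp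
    next
      case False then have "0 < u * x$i" using \<open>0 \<le> u\<close> \<open>0 < x$i\<close> by simp
      moreover have "0 \<le> v * y$i" using \<open>0 \<le> v\<close> \<open>0 < y$i\<close> by simp
      ultimately show ?thesis by linarith
    qed
  qed
qed

lemma C_pos: "x \<in> C \<Longrightarrow> 0 < x$i"
proof -
  assume "x \<in> C"
  moreover have "C \<subseteq> {x. \<forall>i. 0 < x$i}"
    by (rule hull_minimal) (auto simp: convex_pos tot_pos_O_def totally_positive_def)
  ultimately show ?thesis by auto
qed

lemma tpO_half: "k \<in> {1,2} \<Longrightarrow> v \<in> U \<Longrightarrow> y \<in> tot_pos_O \<Longrightarrow> 1 \<le> (alph k * v) \<bullet> y"
  using partA(1) tp_mult U_sub by (metis inner_mult subsetD)

lemma C_half: "k \<in> {1,2} \<Longrightarrow> v \<in> U \<Longrightarrow> x \<in> C \<Longrightarrow> 1 \<le> (alph k * v) \<bullet> x"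
proof -
  assume a: "k \<in> {1,2}" "v \<in> U" "x \<in> C"
  have "C \<subseteq> {x. 1 \<le> (alph k * v) \<bullet> x}"
    by (rule hull_minimal) (use tpO_half[OF a(1,2)] convex_halfspace_ge in auto)
  then show ?thesis using a by auto
qed

lemma linear_mult: "linear (\<lambda>x::real^3. u * x)"
  by (rule linearI) (simp_all add: distrib_left)

lemma face_translate:
  assumes k: "k \<in> {1,2}" and u: "u \<in> U" "v \<in> U" "v * u = 1"
  shows "C \<inter> {x. (alph k * v) \<bullet> x = 1} = (\<lambda>x. u * x) ` (convex hull Vs k)"
proof -
  have "C \<inter> {x. (alph k * v) \<bullet> x = 1} = convex hull (tot_pos_O \<inter> {x. (alph k * v) \<bullet> x = 1})"
    by (rule hull_slice) (use tpO_half[OF k u(2)] in auto)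
  also have "tot_pos_O \<inter> {x. (alph k * v) \<bullet> x = 1} = (\<lambda>x. u * x) ` Vs k"
  proof
    show "tot_pos_O \<inter> {x. (alph k * v) \<bullet> x = 1} \<subseteq> (\<lambda>x. u * x) ` Vs k"
    proof
      fix y assume y: "y \<in> tot_pos_O \<inter> {x. (alph k * v) \<bullet> x = 1}"
      then have "v * y \<in> tot_pos_O" using tp_mult U_sub u by blast
      moreover have "alph k \<bullet> (v * y) = 1" using y by (simp add: inner_mult)
      ultimately have "v * y \<in> Vs k" using partA(2)[OF k] by blast
      moreover have "y = u * (v * y)" using u(3) by (metis mult.assoc mult.commute mult_1_left)
      ultimately show "y \<in> (\<lambda>x. u * x) ` Vs k" by blast
    qed
  next
    show "(\<lambda>x. u * x) ` Vs k \<subseteq> tot_pos_O \<inter> {x. (alph k * v) \<bullet> x = 1}"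
    proof
      fix y assume "y \<in> (\<lambda>x. u * x) ` Vs k"
      then obtain P where P: "P \<in> Vs k" "y = u * P" by blast
      have "y \<in> tot_pos_O" using P Vs_tp[OF k] tp_mult U_sub u by blast
      moreover have "(alph k * v) \<bullet> y = 1" using P u(3) Vs_val[OF k]
        by (metis inner_mult mult.assoc mult_1_left)
      ultimately show "y \<in> tot_pos_O \<inter> {x. (alph k * v) \<bullet> x = 1}" by blast
    qed
  qed
  also have "convex hull ((\<lambda>x. u * x) ` Vs k) = (\<lambda>x. u * x) ` (convex hull Vs k)"
    by (rule convex_hull_linear_image[OF linear_mult, symmetric])
  finally show ?thesis .
qed

lemma tri_translate:
  assumes "tri P1 P2 P3 A0 A1 A2 A3" "v * u = 1"
  shows "tri (u * P1) (u * P2) (u * P3) (A0 * v) (A1 * v) (A2 * v) (A3 * v)"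
proof -
  have e: "(A * v) \<bullet> (u * P) = A \<bullet> P" for A P :: "real^3"
    using assms(2) by (metis inner_mult mult.assoc mult_1_left)
  show ?thesis using assms(1) unfolding tri_def e .
qed

lemma tri1: "tri (eltv 1 0 0) (eltv 0 0 1) (eltv 1 2 1) (alph 1) (alph 2 * eltv 5 (-1) (-2)) (alph 2) (alph 2 * eltv 2 1 0)"
  unfolding tri_def inner_mult[symmetric] by (simp add: eltv_mult alph1_val alph2_val)

lemma tri2: "tri (eltv 1 0 0) (eltv 2 1 0) (eltv 1 2 1) (alph 2) (alph 1 * eltv 0 (-1) 1) (alph 1) (alph 1 * eltv 0 0 1)"
  unfolding tri_def inner_mult[symmetric] by (simp add: eltv_mult alph1_val alph2_val)

lemma tri_data:
  assumes "k \<in> {1,2}"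
  shows "\<exists>P1 P2 P3 k1 k2 k3 E1 E2 E3. Vs k = {P1,P2,P3} \<and> k1 \<in> {1,2} \<and> k2 \<in> {1,2} \<and> k3 \<in> {1,2}
     \<and> E1 \<in> U \<and> E2 \<in> U \<and> E3 \<in> U \<and> tri P1 P2 P3 (alph k) (alph k1 * E1) (alph k2 * E2) (alph k3 * E3)"
proof (cases "k = 1")
  case True
  show ?thesis
    by (rule exI[of _ "eltv 1 0 0"], rule exI[of _ "eltv 0 0 1"], rule exI[of _ "eltv 1 2 1"],
        rule exI[of _ 2], rule exI[of _ 2], rule exI[of _ 2],
        rule exI[of _ "eltv 5 (-1) (-2)"], rule exI[of _ 1], rule exI[of _ "eltv 2 1 0"])
       (use True tri1 e2i_U U_one e1_U in \<open>simp add: Vs_def\<close>)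
next
  case False
  then have k: "k = 2" using assms by simp
  show ?thesis
    by (rule exI[of _ "eltv 1 0 0"], rule exI[of _ "eltv 2 1 0"], rule exI[of _ "eltv 1 2 1"],
        rule exI[of _ 1], rule exI[of _ 1], rule exI[of _ 1],
        rule exI[of _ "eltv 0 (-1) 1"], rule exI[of _ 1], rule exI[of _ "eltv 0 0 1"])
       (use k tri2 e1i_U U_one e2_U in \<open>simp add: Vs_def\<close>)
qed

lemma facet_translate:
  assumes k: "k \<in> {1,2}" and u: "u \<in> U"
  shows "(\<lambda>x. u * x) ` (convex hull Vs k) facet_of C"
proof -
  obtain v where v: "v \<in> U" "u * v = 1" "v * u = 1" using U_inv[OF u] by metis
  define F where "F = (\<lambda>x. u * x) ` (convex hull Vs k)"
  have FH: "F = C \<inter> {x. (alph k * v) \<bullet> x = 1}" unfolding F_def using face_translate[OF k u v(1,3)] by simp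
  have face: "F face_of C" unfolding FH
    by (rule face_of_Int_supporting_hyperplane_ge) (use C_half[OF k v(1)] in auto)
  obtain P1 P2 P3 k1 k2 k3 E1 E2 E3 where D: "Vs k = {P1,P2,P3}"
     "tri P1 P2 P3 (alph k) (alph k1 * E1) (alph k2 * E2) (alph k3 * E3)"
    using tri_data[OF k] by blast
  have T: "tri (u * P1) (u * P2) (u * P3) (alph k * v) (alph k1 * E1 * v) (alph k2 * E2 * v) (alph k3 * E3 * v)"
    by (rule tri_translate[OF D(2) v(3)])
  have F3: "F = convex hull {u * P1, u * P2, u * P3}"
    unfolding F_def D(1) convex_hull_linear_image[OF linear_mult] by simp
  have affF: "aff_dim F = 2" unfolding F3 aff_dim_convex_hull using tri.aff_dim2[OF T] .
  have "u * eltv 2 0 0 \<in> tot_pos_O"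
    using tp_mult U_sub u eltv_tpO[of 2 0 0] wb by (auto simp: eltv_comp)
  then have "u * eltv 2 0 0 \<in> C" by (simp add: hull_inc)
  moreover have "(alph k * v) \<bullet> (u * eltv 2 0 0) = 2"
    using k v(3) by (auto simp: alph1_val alph2_val simp flip: inner_mult mult.assoc)
  then have "u * eltv 2 0 0 \<notin> F" unfolding FH by simp
  ultimately have "F \<noteq> C" by blast
  then have "aff_dim F < aff_dim C" using face_of_aff_dim_lt[OF convex_convex_hull face] by simp
  moreover have "aff_dim C \<le> 3" using aff_dim_le_DIM[of C] by simp
  ultimately have "aff_dim C = 3" using affF by simp
  moreover have "F \<noteq> {}" unfolding F3 by simp
  ultimately show ?thesis using face affF unfolding F_def[symmetric] facet_of_def by simp
qed

lemma alph_pos: "k \<in> {1,2} \<Longrightarrow> 1/10 \<le> (alph k)$i"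
  using exhaust_3[of i] wb by (auto simp: alph_def eltr_nth sq_cyc algebra_simps)

lemma inner_term_le:
  assumes "\<forall>i. 0 \<le> (a::real^3)$i" "\<forall>i. 0 \<le> y$i"
  shows "a$j * y$j \<le> a \<bullet> y"
proof -
  have t: "0 \<le> a$i * y$i" for i using assms by simp
  show ?thesis using exhaust_3[of j] t[of 1] t[of 2] t[of 3] unfolding inner3
    by (elim disjE) simp_all
qed

lemma inner_bound:
  assumes "\<forall>i. \<bar>(y::real^3)$i\<bar> \<le> D" "\<forall>i. \<bar>v$i\<bar> \<le> R"
  shows "\<bar>y \<bullet> v\<bar> \<le> 3*(D*R)"
proof -
  have t: "\<bar>y$i * v$i\<bar> \<le> D*R" for i
    unfolding abs_mult using assms by (intro mult_mono) (auto intro: order_trans[OF abs_ge_zero])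
  have "\<bar>y \<bullet> v\<bar> \<le> \<bar>y$1 * v$1\<bar> + \<bar>y$2 * v$2\<bar> + \<bar>y$3 * v$3\<bar>"
  proof -
    have "\<bar>y$1 * v$1 + y$2 * v$2 + y$3 * v$3\<bar> \<le> \<bar>y$1 * v$1 + y$2 * v$2\<bar> + \<bar>y$3 * v$3\<bar>"
      by (rule abs_triangle_ineq)
    moreover have "\<bar>y$1 * v$1 + y$2 * v$2\<bar> \<le> \<bar>y$1 * v$1\<bar> + \<bar>y$2 * v$2\<bar>"
      by (rule abs_triangle_ineq)
    ultimately show ?thesis unfolding inner3 by linarith
  qed
  then show ?thesis using t[of 1] t[of 2] t[of 3] by linarith
qed

lemma dual_abc: "eltr 1 (-1/7) (-3/7) \<bullet> eltv a b c = of_int a"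
  "eltr (-1/7) (2/7) (1/7) \<bullet> eltv a b c = of_int b"
  "eltr (-3/7) (1/7) (2/7) \<bullet> eltv a b c = of_int c"
  by (simp_all add: trace_eltr)

lemma dual_small: "\<forall>i. \<bar>(eltr 1 (-1/7) (-3/7))$i\<bar> \<le> 1" "\<forall>i. \<bar>(eltr (-1/7) (2/7) (1/7))$i\<bar> \<le> 1"
  "\<forall>i. \<bar>(eltr (-3/7) (1/7) (2/7))$i\<bar> \<le> 1"
  unfolding forall_3 eltr_nth sq_cyc abs_le_iff using wb by (simp_all add: ring_distribs)

lemma fin_box: "finite {v \<in> ints_O. \<forall>i. \<bar>v$i\<bar> \<le> R}"
proof -
  define N where "N = \<lceil>3*R\<rceil>"
  have "{v \<in> ints_O. \<forall>i. \<bar>v$i\<bar> \<le> R} \<subseteq> (\<lambda>(a,b,c). eltv a b c) ` ({-N..N} \<times> {-N..N} \<times> {-N..N})"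
  proof
    fix v assume v: "v \<in> {v \<in> ints_O. \<forall>i. \<bar>v$i\<bar> \<le> R}"
    then obtain a b c where e: "v = eltv a b c" by (auto simp: ints_O_iff)
    have vb: "\<forall>i. \<bar>(eltv a b c)$i\<bar> \<le> R" using v e by auto
    have "\<bar>of_int a\<bar> \<le> 3*(1*R)" using inner_bound[OF dual_small(1) vb] unfolding dual_abc by simp
    moreover have "\<bar>of_int b\<bar> \<le> 3*(1*R)" using inner_bound[OF dual_small(2) vb] unfolding dual_abc by simp
    moreover have "\<bar>of_int c\<bar> \<le> 3*(1*R)" using inner_bound[OF dual_small(3) vb] unfolding dual_abc by simp
    ultimately have "\<bar>of_int a\<bar> \<le> 3*R" "\<bar>of_int b\<bar> \<le> 3*R" "\<bar>of_int c\<bar> \<le> 3*R" by simp_all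
    then have "\<bar>a\<bar> \<le> N" "\<bar>b\<bar> \<le> N" "\<bar>c\<bar> \<le> N" unfolding N_def by linarith+
    then show "v \<in> (\<lambda>(a,b,c). eltv a b c) ` ({-N..N} \<times> {-N..N} \<times> {-N..N})"
      using e by (auto simp: abs_le_iff intro!: image_eqI[of _ _ "(a,b,c)"])
  qed
  then show ?thesis by (rule finite_subset) auto
qed

lemma U_pos: "v \<in> U \<Longrightarrow> 0 < v$i"
  by (auto simp: tot_pos_units_O_def totally_positive_def)

lemma sublevel_fin:
  assumes x: "\<forall>i. 0 < x$i" and k: "k \<in> {1,2}"
  shows "finite {v \<in> U. alph k \<bullet> (v * x) \<le> B}"
proof -
  define R where "R = 10*\<bar>B\<bar>*(1/x$1 + 1/x$2 + 1/x$3)"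
  have "{v \<in> U. alph k \<bullet> (v * x) \<le> B} \<subseteq> {v \<in> ints_O. \<forall>i. \<bar>v$i\<bar> \<le> R}"
  proof
    fix v assume v: "v \<in> {v \<in> U. alph k \<bullet> (v * x) \<le> B}"
    have vU: "v \<in> ints_O" using v by (auto simp: tot_pos_units_O_def units_O_def)
    have ap: "0 \<le> (alph k)$i" for i using alph_pos[OF k, of i] by linarith
    have "\<bar>v$j\<bar> \<le> R" for j
    proof -
      have vp: "0 < v$j" using v U_pos by auto
      have "(alph k)$j * (v * x)$j \<le> alph k \<bullet> (v * x)"
        by (rule inner_term_le) (use ap U_pos v x in \<open>auto intro: less_imp_le\<close>)
      then have "(alph k)$j * (v$j * x$j) \<le> B" using v by simp
      moreover have "(1/10) * (v$j * x$j) \<le> (alph k)$j * (v$j * x$j)"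
        by (rule mult_right_mono) (use alph_pos[OF k, of j] vp x[rule_format, of j] in \<open>auto intro: less_imp_le\<close>)
      ultimately have "v$j * x$j \<le> 10 * B" by linarith
      then have "v$j \<le> 10 * B / x$j" using x by (simp add: pos_le_divide_eq)
      also have "\<dots> \<le> 10 * \<bar>B\<bar> / x$j" using x[rule_format, of j] by (intro divide_right_mono) auto
      also have "\<dots> \<le> R"
      proof -
        have "0 < 1/x$i" for i using x by simp
        then have "1/x$j \<le> 1/x$1 + 1/x$2 + 1/x$3" using exhaust_3[of j] by (elim disjE) (simp_all add: add_pos_pos less_imp_le)
        then have "10*\<bar>B\<bar> * (1/x$j) \<le> 10*\<bar>B\<bar>*(1/x$1 + 1/x$2 + 1/x$3)" by (rule mult_left_mono) simp
        then show ?thesis unfolding R_def by simp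
      qed
      finally show ?thesis using vp by simp
    qed
    then show "v \<in> {v \<in> ints_O. \<forall>i. \<bar>v$i\<bar> \<le> R}" using vU by auto
  qed
  then show ?thesis using fin_box finite_subset by blast
qed

lemma inner_pos:
  assumes "k \<in> {1,2}" "\<forall>i. 0 < y$i"
  shows "0 < alph k \<bullet> y"
proof -
  have ap: "0 \<le> (alph k)$i" for i using alph_pos[OF assms(1), of i] by linarith
  have "alph k $ 1 * y$1 \<le> alph k \<bullet> y"
    by (rule inner_term_le) (use ap assms(2) in \<open>auto intro: less_imp_le\<close>)
  moreover have "0 < alph k $ 1 * y$1" using alph_pos[OF assms(1), of 1] assms(2) by simp
  ultimately show ?thesis by linarith
qed

lemma cover:
  assumes x: "\<forall>i. 0 < x$i"
  obtains u v k m p where "u \<in> U" "v \<in> U" "v * u = 1" "k \<in> {1,2}" "0 < m"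
    "(alph k * v) \<bullet> x = m" "p \<in> (\<lambda>y. u * y) ` (convex hull Vs k)" "x = m *\<^sub>R p"
proof -
  define f where "f = (\<lambda>(v,k). alph k \<bullet> (v * x))"
  define B0 where "B0 = alph 1 \<bullet> x"
  define S where "S = {(v,k). v \<in> U \<and> k \<in> {1,2} \<and> alph k \<bullet> (v * x) \<le> B0}"
  have "S \<subseteq> {v \<in> U. alph 1 \<bullet> (v * x) \<le> B0} \<times> {1} \<union> {v \<in> U. alph 2 \<bullet> (v * x) \<le> B0} \<times> {2}"
    unfolding S_def by auto
  moreover have "finite ({v \<in> U. alph 1 \<bullet> (v * x) \<le> B0} \<times> {1} \<union> {v \<in> U. alph 2 \<bullet> (v * x) \<le> B0} \<times> {2})"
    using sublevel_fin[OF x, of 1 B0] sublevel_fin[OF x, of 2 B0] by auto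
  ultimately have finS: "finite S" by (rule finite_subset)
  have "(1,1) \<in> S" unfolding S_def B0_def using U_one by simp
  then have neS: "S \<noteq> {}" by blast
  define M where "M = Min (f ` S)"
  have "M \<in> f ` S" unfolding M_def using finS neS by simp
  then obtain v0 k0 where z: "(v0,k0) \<in> S" "f (v0,k0) = M" by auto
  have Mle: "\<And>z. z \<in> S \<Longrightarrow> M \<le> f z" unfolding M_def using finS by simp
  have v0: "v0 \<in> U" "k0 \<in> {1,2}" using z unfolding S_def by auto
  define m where "m = alph k0 \<bullet> (v0 * x)"
  have mM: "m = M" using z unfolding m_def f_def by simp
  have minf: "m \<le> alph k \<bullet> (v * x)" if "v \<in> U" "k \<in> {1,2}" for v k
  proof (cases "alph k \<bullet> (v * x) \<le> B0")
    case True
    then have "(v,k) \<in> S" using that unfolding S_def by simp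
    then show ?thesis using Mle mM unfolding f_def by fastforce
  next
    case False
    moreover have "m \<le> B0" using z unfolding S_def m_def by simp
    ultimately show ?thesis by simp
  qed
  have mpos: "0 < m" unfolding m_def
    by (rule inner_pos[OF v0(2)]) (use U_pos[OF v0(1)] x in \<open>simp\<close>)
  define q where "q = (1/m) *\<^sub>R (v0 * x)"
  have qval: "alph k \<bullet> (v * q) = (1/m) * (alph k \<bullet> ((v * v0) * x))" for k v
    unfolding q_def by (simp add: mult.assoc)
  have q0: "alph k0 \<bullet> q = 1" using qval[of k0 1] mpos unfolding m_def by simp
  have qge: "1 \<le> (alph k * v) \<bullet> q" if "v \<in> U" "k \<in> {1,2}" for v k
  proof -
    have "m \<le> alph k \<bullet> ((v * v0) * x)" using minf[OF U_mult[OF that(1) v0(1)] that(2)] .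
    then have "1 \<le> (1/m) * (alph k \<bullet> ((v * v0) * x))" using mpos by (simp add: field_simps)
    then show ?thesis using qval[of k v] by (simp add: inner_mult)
  qed
  obtain P1 P2 P3 k1 k2 k3 E1 E2 E3 where D: "Vs k0 = {P1,P2,P3}" "k1 \<in> {1,2}" "k2 \<in> {1,2}" "k3 \<in> {1,2}"
     "E1 \<in> U" "E2 \<in> U" "E3 \<in> U" "tri P1 P2 P3 (alph k0) (alph k1 * E1) (alph k2 * E2) (alph k3 * E3)"
    using tri_data[OF v0(2)] by blast
  have qin: "q \<in> convex hull Vs k0"
    unfolding D(1) by (rule tri.in_hull[OF D(8) q0 qge[OF D(5,2)] qge[OF D(6,3)] qge[OF D(7,4)]])
  obtain u0 where u0: "u0 \<in> U" "v0 * u0 = 1" "u0 * v0 = 1" using U_inv[OF v0(1)] by metis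
  have "u0 * q = (1/m) *\<^sub>R ((u0 * v0) * x)" unfolding q_def by (simp add: mult.assoc)
  then have "u0 * q = (1/m) *\<^sub>R x" using u0(3) by simp
  then have xe: "x = m *\<^sub>R (u0 * q)" using mpos by simp
  have mv: "(alph k0 * v0) \<bullet> x = m" unfolding m_def by (simp add: inner_mult)
  show ?thesis by (rule that[OF u0(1) v0(1) u0(2) v0(2) mpos mv imageI[OF qin] xe])
qed

lemma lim_contra2:
  fixes a1 a2 a3 e1 e2 e3 :: real
  assumes "a1 < 0" "0 < e2" "e2 < e1" "0 < e3" "e3 < e1"
    and h: "\<And>n. 0 \<le> a1 * e1^n + a2 * e2^n + a3 * e3^n"
  shows False
proof -
  have e1: "0 < e1" using assms by simp
  define g where "g n = a1 + a2 * (e2/e1)^n + a3 * (e3/e1)^n" for n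
  have "g n = (a1 * e1^n + a2 * e2^n + a3 * e3^n) / e1^n" for n
    unfolding g_def using e1 by (simp add: power_divide field_simps)
  then have gpos: "0 \<le> g n" for n using h[of n] e1 by simp
  have L2: "(\<lambda>n. (e2/e1)^n) \<longlonglongrightarrow> 0" using assms by (intro LIMSEQ_realpow_zero) auto
  have L3: "(\<lambda>n. (e3/e1)^n) \<longlonglongrightarrow> 0" using assms by (intro LIMSEQ_realpow_zero) auto
  have "g \<longlonglongrightarrow> a1 + a2 * 0 + a3 * 0" unfolding g_def
    by (intro tendsto_add tendsto_const tendsto_mult_left L2 L3)
  then have lim: "g \<longlonglongrightarrow> a1" by simp
  have "0 \<le> a1" using LIMSEQ_le_const[OF lim, of 0] gpos by auto
  then show False using assms by simp
qed

lemma pow_tpO: "E \<in> tot_pos_O \<Longrightarrow> E ^ n \<in> tot_pos_O"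
proof (induct n)
  case 0
  have "eltv 1 0 0 \<in> tot_pos_O" by (rule eltv_tpO) (simp_all add: eltv_comp)
  then show ?case by (simp add: eltv_1)
next
  case (Suc n)
  then show ?case by (simp add: tp_mult)
qed

lemma inner_pow: "(a::real^3) \<bullet> (E ^ n) = a$1 * (E$1)^n + a$2 * (E$2)^n + a$3 * (E$3)^n"
  by (simp add: inner3 vec_power_nth)

lemma no_neg:
  assumes a0: "a \<noteq> 0" and az: "a \<bullet> z = 0" and zp: "\<forall>i. 0 < z$i"
    and ge: "\<forall>y\<in>tot_pos_O. 0 \<le> a \<bullet> y"
  shows False
proof -
  have "\<exists>j. a$j < 0"
  proof (rule ccontr)
    assume "\<not> ?thesis"
    then have nn: "0 \<le> a$j" for j by (simp add: not_less)
    have t: "0 \<le> a$j * z$j" for j using nn zp by (simp add: less_imp_le)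
    have "a$1 * z$1 + a$2 * z$2 + a$3 * z$3 = 0" using az by (simp add: inner3)
    then have "a$1 * z$1 = 0" "a$2 * z$2 = 0" "a$3 * z$3 = 0" using t[of 1] t[of 2] t[of 3] by linarith+
    then have "a$1 = 0" "a$2 = 0" "a$3 = 0" using zp[rule_format, of 1] zp[rule_format, of 2] zp[rule_format, of 3] by simp_all
    then have "a = 0" by (simp add: vec_eq_iff forall_3)
    then show False using a0 by simp
  qed
  then obtain j where j: "a$j < 0" by blast
  have hE: "0 \<le> a$1 * (E$1)^n + a$2 * (E$2)^n + a$3 * (E$3)^n" if "E \<in> tot_pos_O" for E n
    using ge pow_tpO[OF that, of n] by (simp flip: inner_pow)
  have t1: "eltv 2 1 0 \<in> tot_pos_O" "eltv 3 (-1) (-1) \<in> tot_pos_O" "eltv 0 0 1 \<in> tot_pos_O"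
    using e1_U e12i_U e2_U U_sub by auto
  consider "j = 1" | "j = 2" | "j = 3" using exhaust_3 by blast
  then show False
  proof cases
    case 1
    show False
      by (rule lim_contra2[of "a$1" "(eltv 2 1 0)$2" "(eltv 2 1 0)$1" "(eltv 2 1 0)$3" "a$2" "a$3"])
         (use j 1 hE[OF t1(1)] wb in \<open>simp_all add: eltv_comp\<close>)
  next
    case 2
    show False
      by (rule lim_contra2[of "a$2" "(eltv 3 (-1) (-1))$1" "(eltv 3 (-1) (-1))$2" "(eltv 3 (-1) (-1))$3" "a$1" "a$3"])
         (use j 2 wb in \<open>simp_all add: eltv_comp\<close>, use hE[OF t1(2)] in \<open>simp add: eltv_comp algebra_simps\<close>)
  next
    case 3
    show False
      by (rule lim_contra2[of "a$3" "(eltv 0 0 1)$1" "(eltv 0 0 1)$3" "(eltv 0 0 1)$2" "a$1" "a$2"])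
         (use j 3 wb in \<open>simp_all add: eltv_comp\<close>, use hE[OF t1(3)] in \<open>simp add: eltv_comp algebra_simps\<close>)
  qed
qed

lemma tpO_scale:
  assumes s: "s \<in> tot_pos_O" and n: "1 \<le> n"
  shows "real n *\<^sub>R s \<in> tot_pos_O"
proof -
  obtain a b c where e: "s = eltv a b c" and p: "0 < s$1" "0 < s$2" "0 < s$3" using s by (auto simp: tpO_iff)
  have "real n *\<^sub>R s = eltv (int n * a) (int n * b) (int n * c)"
    unfolding e by (simp add: vec_eq_iff eltv_nth algebra_simps)
  moreover have "0 < (real n *\<^sub>R s)$i" if "0 < s$i" for i using that n by simp
  ultimately show ?thesis using p tpO_iff by metis
qed

lemma C_scale:
  assumes y: "y \<in> C" and t: "1 \<le> t"
  shows "t *\<^sub>R y \<in> C"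
proof -
  have base: "t *\<^sub>R s \<in> C" if s: "s \<in> tot_pos_O" for s
  proof -
    define N where "N = nat \<lceil>t\<rceil>"
    have N1: "1 \<le> N" "t \<le> real N" using t unfolding N_def by linarith+
    have sC: "s \<in> C" "real N *\<^sub>R s \<in> C" using s tpO_scale[OF s N1(1)] by (auto intro: hull_inc)
    show ?thesis
    proof (cases "N = 1")
      case True
      then have "t = 1" using N1 t by simp
      then show ?thesis using sC by simp
    next
      case False
      then have N2: "1 < real N" using N1 by simp
      define th where "th = (t - 1) / (real N - 1)"
      have th: "0 \<le> th" "th \<le> 1" unfolding th_def using t N1 N2 by (auto simp: field_simps)
      have "(1 - th) *\<^sub>R s + th *\<^sub>R (real N *\<^sub>R s) = ((1 - th) + th * real N) *\<^sub>R s"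
        by (simp add: scaleR_add_left)
      also have "(1 - th) + th * real N = t"
      proof -
        have thN: "th * (real N - 1) = t - 1" unfolding th_def using N2 by simp
        have "th * (real N - 1) = th * real N - th" by (simp add: right_diff_distrib)
        then show ?thesis using thN by linarith
      qed
      finally have "t *\<^sub>R s = (1 - th) *\<^sub>R s + th *\<^sub>R (real N *\<^sub>R s)" by simp
      moreover have "(1 - th) *\<^sub>R s + th *\<^sub>R (real N *\<^sub>R s) \<in> C"
        by (rule convexD[OF convex_convex_hull sC]) (use th in auto)
      ultimately show ?thesis by simp
    qed
  qed
  have "(\<lambda>x. t *\<^sub>R x) ` C = convex hull ((\<lambda>x. t *\<^sub>R x) ` tot_pos_O)"
    by (rule convex_hull_scaling[symmetric])
  also have "\<dots> \<subseteq> C" by (rule hull_minimal) (use base in auto)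
  finally show ?thesis using y by blast
qed

theorem proposition3p2:
  shows "{F. F facet_of (convex hull tot_pos_O)} =
           {(\<lambda>x. u * x) ` triangle1 | u. u \<in> tot_pos_units_O} \<union>
           {(\<lambda>x. u * x) ` triangle2 | u. u \<in> tot_pos_units_O}"
proof
  show "{(\<lambda>x. u * x) ` triangle1 | u. u \<in> tot_pos_units_O} \<union>
        {(\<lambda>x. u * x) ` triangle2 | u. u \<in> tot_pos_units_O} \<subseteq> {F. F facet_of C}"
    using facet_translate[of 1] facet_translate[of 2] unfolding tri_eq by auto
next
  show "{F. F facet_of C} \<subseteq> {(\<lambda>x. u * x) ` triangle1 | u. u \<in> tot_pos_units_O} \<union>
        {(\<lambda>x. u * x) ` triangle2 | u. u \<in> tot_pos_units_O}"
  proof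
    fix F assume "F \<in> {F. F facet_of C}"
    then have Ff: "F facet_of C" by simp
    have Fface: "F face_of C" and Fne: "F \<noteq> {}" and Fdim: "aff_dim F = aff_dim C - 1"
      using Ff by (auto simp: facet_of_def)
    have Fconv: "convex F" using Fface face_of_imp_convex by blast
    have FC: "F \<subseteq> C" using Fface face_of_imp_subset by blast
    obtain z where z: "z \<in> rel_interior F" using rel_interior_eq_empty[OF Fconv] Fne by blast
    have zF: "z \<in> F" using z rel_interior_subset by blast
    have zC: "z \<in> C" using zF FC by blast
    have zp: "\<forall>i. 0 < z$i" using C_pos[OF zC] by blast
    obtain u v k m p where uv: "u \<in> U" "v \<in> U" "v * u = 1" and k: "k \<in> {1,2}" and m: "0 < m"
      "(alph k * v) \<bullet> z = m" and p: "p \<in> (\<lambda>y. u * y) ` (convex hull Vs k)" and zm: "z = m *\<^sub>R p"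
      using cover[OF zp] by metis
    define G where "G = (\<lambda>y. u * y) ` (convex hull Vs k)"
    have Gf: "G facet_of C" unfolding G_def by (rule facet_translate[OF k uv(1)])
    have Gface: "G face_of C" using Gf by (simp add: facet_of_def)
    have GC: "G \<subseteq> C" using Gface face_of_imp_subset by blast
    have m1: "1 \<le> m" using C_half[OF k uv(2) zC] m by simp
    have "m = 1"
    proof (rule ccontr)
      assume "m \<noteq> 1"
      then have m1': "1 < m" using m1 by simp
      have "F \<noteq> C" using Fdim by auto
      then have "z \<notin> rel_interior C" using face_of_disjoint_rel_interior[OF Fface] zF by blast
      then obtain a where a: "a \<noteq> 0" "\<And>y. y \<in> C \<Longrightarrow> a \<bullet> z \<le> a \<bullet> y"
        using supporting_hyperplane_rel_boundary[OF convex_convex_hull zC] by metis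
      have pC: "p \<in> C" using p GC unfolding G_def by blast
      have "a \<bullet> z \<le> a \<bullet> p" using a(2)[OF pC] .
      moreover have "a \<bullet> z = m * (a \<bullet> p)" using zm by simp
      ultimately have ap1: "(m - 1) * (a \<bullet> p) \<le> 0" by (simp add: algebra_simps)
      have "a \<bullet> z \<le> a \<bullet> (2 *\<^sub>R z)" using a(2)[OF C_scale[OF zC]] by simp
      then have az0: "0 \<le> a \<bullet> z" by simp
      have "a \<bullet> p \<le> 0" using ap1 m1' by (simp add: mult_le_0_iff)
      then have "a \<bullet> z \<le> 0" using \<open>a \<bullet> z = m * (a \<bullet> p)\<close> m by (simp add: mult_le_0_iff)
      then have az: "a \<bullet> z = 0" using az0 by simp
      have "\<forall>y\<in>tot_pos_O. 0 \<le> a \<bullet> y" using a(2) az by (metis hull_inc)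
      then show False using no_neg[OF a(1) az zp] by simp
    qed
    then have "z \<in> G" using zm p unfolding G_def by simp
    then have "G \<inter> rel_interior F \<noteq> {}" using z by blast
    then have FG: "F \<subseteq> G" using subset_of_face_of[OF Gface FC] by blast
    have "F face_of G" using face_of_subset[OF Fface FG GC] .
    moreover have "aff_dim F = aff_dim G" using Fdim Gf by (simp add: facet_of_def)
    ultimately have "F = G"
      using face_of_aff_dim_lt[OF face_of_imp_convex[OF Gface]] by fastforce
    then show "F \<in> {(\<lambda>x. u * x) ` triangle1 | u. u \<in> tot_pos_units_O} \<union>
        {(\<lambda>x. u * x) ` triangle2 | u. u \<in> tot_pos_units_O}"
      using k uv(1) unfolding G_def tri_eq by auto
  qed
qed

end
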